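(* Let $M\in\mathbb{Z}$, $N,Q\in\mathbb{N}$, and let $a_{M+1},\dots,a_{M+N}$ be complex numbers. For each positive integer $q$, \[ \frac{q}{\varphi(q)}\sum_{\xi\in G_1(q)}\Bigl|\sum_{n=M+1}^{M+N}a_n\,\xi(n)\Bigr|^2=\bigl(q+O(N)\bigr)\sum_{\substack{M<n\le M+N\\ \gcd(n,q)=1}}|a_n|^2, \] with an absolute implied constant (i.e. the left side minus $q\sum_{\gcd(n,q)=1}|a_n|^2$ is bounded in absolute value by $C N\sum_{\gcd(n,q)=1}|a_n|^2$ for an absolute constant $C$). Consequently \[ \sum_{q=1}^{Q}\frac{q}{\varphi(q)}\sum_{\xi\in G_1(q)}\Bigl|\sum_{n=M+1}^{M+N}a_n\,\xi(n)\Bigr|^2\ll (Q^2+QN)\sum_{n=M+1}^{M+N}|a_n|^2, \] with an absolute implied constant.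
   Context: $e(x)=\exp(2\pi i x)$ and $\varphi$ is Euler's function. For a positive integer $q$, $G_1(q)$ denotes the set of Dirichlet characters $\xi$ modulo $q^2$ such that $\xi(x)=e\!\left(\frac{x-1}{q^2}\right)$ for every integer $x\equiv 1\pmod q$. Dirichlet characters modulo $q^2$ vanish on integers not coprime to $q$. *)

theory Defs
  imports "HOL-Analysis.Analysis" "HOL-Number_Theory.Number_Theory"
begin

definition e :: "real \<Rightarrow> complex" where
  "e x = exp (2 * pi * \<i> * complex_of_real x)"

definition dirichlet_char :: "int \<Rightarrow> (int \<Rightarrow> complex) \<Rightarrow> bool" where
  "dirichlet_char m chi \<longleftrightarrow>
     (\<forall>n. chi (n + m) = chi n) \<and>
     (\<forall>a b. chi (a * b) = chi a * chi b) \<and>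
     chi 1 = 1 \<and>
     (\<forall>n. chi n = 0 \<longleftrightarrow> \<not> coprime n m)"

definition G1 :: "nat \<Rightarrow> (int \<Rightarrow> complex) set" where
  "G1 q = {\<xi>. dirichlet_char (int q ^ 2) \<xi> \<and>
              (\<forall>x. [x = 1] (mod int q) \<longrightarrow> \<xi> x = e (real_of_int (x - 1) / real q ^ 2))}"

end

theory Submission
  imports Defs
begin

lemma cong_coprime_tr: "coprime (a::int) m \<Longrightarrow> [a = b] (mod m) \<Longrightarrow> coprime b m"
  using coprime_cong_transfer_left by blast

lemma euler_int:
  fixes x m :: int
  assumes "m > 0" "coprime x m"
  shows "[x ^ totient (nat m) = 1] (mod m)"
proof (cases "m = 1")
  case True then show ?thesis by simp
next
  case False
  then have "residues m" using assms by (simp add: residues_def)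
  show ?thesis by (rule residues.euler_theorem[OF \<open>residues m\<close> assms(2)])
qed

lemma dchar_props:
  assumes "dirichlet_char m chi"
  shows "chi (n + m) = chi n" "chi (a * b) = chi a * chi b" "chi 1 = 1"
        "chi n = 0 \<longleftrightarrow> \<not> coprime n m"
  using assms unfolding dirichlet_char_def by blast+

lemma dchar_shift:
  assumes "dirichlet_char m chi"
  shows "chi (n + m * k) = chi n"
proof -
  have A: "chi (n + m * int j) = chi n" for n j
  proof (induction j arbitrary: n)
    case 0 then show ?case by simp
  next
    case (Suc j)
    have "n + m * int (Suc j) = (n + m * int j) + m" by (simp add: algebra_simps)
    then show ?case using dchar_props(1)[OF assms, of "n + m * int j"] Suc.IH by (metis add.assoc)
  qed
  show ?thesis
  proof (cases "k \<ge> 0")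
    case True
    then show ?thesis using A[of n "nat k"] by simp
  next
    case False
    then have "chi n = chi ((n + m * k) + m * int (nat (-k)))" by simp
    then show ?thesis using A[of "n + m * k" "nat (-k)"] by simp
  qed
qed

lemma dchar_cong:
  assumes "dirichlet_char m chi" "[x = y] (mod m)"
  shows "chi x = chi y"
proof -
  obtain k where "y = x + m * k" using assms(2) cong_iff_lin by blast
  then show ?thesis using dchar_shift[OF assms(1)] by simp
qed

lemma dchar_power:
  assumes "dirichlet_char m chi"
  shows "chi (x ^ k) = chi x ^ k"
  by (induction k) (simp_all add: dchar_props[OF assms])

lemma dchar_norm:
  assumes "dirichlet_char m chi" "m > 0" "coprime x m"
  shows "norm (chi x) = 1"
proof -
  define t where "t = totient (nat m)"
  have t: "t > 0" using assms(2) by (simp add: t_def)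
  have "chi x ^ t = chi (x ^ t)" using dchar_power[OF assms(1)] by simp
  also have "\<dots> = chi 1" using dchar_cong[OF assms(1) euler_int[OF assms(2,3)]] by (simp add: t_def)
  also have "\<dots> = 1" using dchar_props(3)[OF assms(1)] .
  finally have "norm (chi x) ^ t = 1 ^ t" by (metis norm_one norm_power power_one)
  then show ?thesis using t power_eq_imp_eq_base[of "norm (chi x)" t 1] by simp
qed

lemma dchar_norm_le:
  assumes "dirichlet_char m chi" "m > 0"
  shows "norm (chi x) \<le> 1"
  using dchar_norm[OF assms] dchar_props(4)[OF assms(1), of x] by (cases "coprime x m") auto

definition sgrp :: "int \<Rightarrow> int set \<Rightarrow> bool" where
  "sgrp m S \<longleftrightarrow> 1 \<in> S \<and> (\<forall>x\<in>S. \<forall>y\<in>S. x * y \<in> S) \<and>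
     (\<forall>x\<in>S. \<forall>y. [y = x] (mod m) \<longrightarrow> y \<in> S) \<and> (\<forall>x\<in>S. coprime x m)"

definition pchar :: "int \<Rightarrow> int set \<Rightarrow> (int \<Rightarrow> complex) \<Rightarrow> bool" where
  "pchar m S psi \<longleftrightarrow> psi 1 = 1 \<and> (\<forall>x\<in>S. \<forall>y\<in>S. psi (x * y) = psi x * psi y) \<and>
     (\<forall>x\<in>S. \<forall>y. [y = x] (mod m) \<longrightarrow> psi y = psi x)"

lemma sgrp_one: "sgrp m S \<Longrightarrow> 1 \<in> S"
  unfolding sgrp_def by blast
lemma sgrp_mult: "sgrp m S \<Longrightarrow> x \<in> S \<Longrightarrow> y \<in> S \<Longrightarrow> x * y \<in> S"
  unfolding sgrp_def by blast
lemma sgrp_cong: "sgrp m S \<Longrightarrow> x \<in> S \<Longrightarrow> [y = x] (mod m) \<Longrightarrow> y \<in> S"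
  unfolding sgrp_def by blast
lemma sgrp_coprime: "sgrp m S \<Longrightarrow> x \<in> S \<Longrightarrow> coprime x m"
  unfolding sgrp_def by blast
lemma pchar_one: "pchar m S psi \<Longrightarrow> psi 1 = 1"
  unfolding pchar_def by blast
lemma pchar_mult: "pchar m S psi \<Longrightarrow> x \<in> S \<Longrightarrow> y \<in> S \<Longrightarrow> psi (x * y) = psi x * psi y"
  unfolding pchar_def by blast
lemma pchar_cong: "pchar m S psi \<Longrightarrow> x \<in> S \<Longrightarrow> [y = x] (mod m) \<Longrightarrow> psi y = psi x"
  unfolding pchar_def by blast

lemma sgrp_pow: "sgrp m S \<Longrightarrow> x \<in> S \<Longrightarrow> x ^ k \<in> S"
  by (induction k) (simp_all add: sgrp_one sgrp_mult)

lemma pchar_pow: "sgrp m S \<Longrightarrow> pchar m S psi \<Longrightarrow> x \<in> S \<Longrightarrow> psi (x ^ k) = psi x ^ k"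
  by (induction k) (simp_all add: pchar_one pchar_mult sgrp_pow)

lemma sgrp_inv:
  assumes "m > 0" "sgrp m S" "x \<in> S"
  shows "\<exists>y\<in>S. [x * y = 1] (mod m)"
proof -
  define t where "t = totient (nat m)"
  have t: "t > 0" using assms(1) by (simp add: t_def)
  have e: "x * x ^ (t - 1) = x ^ t" using t by (cases t) simp_all
  have "coprime x m" using assms(2,3) by (rule sgrp_coprime)
  then have "[x ^ t = 1] (mod m)" unfolding t_def using euler_int assms(1) by blast
  then have "[x * x ^ (t - 1) = 1] (mod m)" by (simp only: e)
  then show ?thesis using sgrp_pow[OF assms(2,3), of "t - 1"] by blast
qed

lemma pchar_nz:
  assumes "m > 0" "sgrp m S" "pchar m S psi" "x \<in> S"
  shows "psi x \<noteq> 0"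
proof -
  obtain y where y: "y \<in> S" "[x * y = 1] (mod m)" using sgrp_inv[OF assms(1,2,4)] by blast
  have one: "1 \<in> S" using assms(2) by (rule sgrp_one)
  have "psi (x * y) = psi 1" using pchar_cong[OF assms(3) one y(2)] .
  moreover have "psi (x * y) = psi x * psi y" using pchar_mult[OF assms(3,4) y(1)] .
  moreover have "psi 1 = 1" using pchar_one[OF assms(3)] .
  ultimately have "psi x * psi y = 1" by simp
  then show ?thesis by auto
qed


lemma ord_exists:
  assumes "m > 0" "sgrp m S" "coprime g m"
  shows "\<exists>r>0. g ^ r \<in> S \<and> (\<forall>k. g ^ k \<in> S \<longrightarrow> r dvd k)"
proof -
  define t where "t = totient (nat m)"
  have t: "t > 0" using assms(1) by (simp add: t_def)
  have "[g ^ t = 1] (mod m)" unfolding t_def using euler_int assms(1,3) by blast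
  then have gt: "g ^ t \<in> S" using sgrp_cong[OF assms(2) sgrp_one[OF assms(2)]] by blast
  define r where "r = (LEAST r. 0 < r \<and> g ^ r \<in> S)"
  have r: "0 < r \<and> g ^ r \<in> S" unfolding r_def by (rule LeastI[of _ t]) (use t gt in blast)
  have "r dvd k" if k: "g ^ k \<in> S" for k
  proof (rule ccontr)
    assume nd: "\<not> r dvd k"
    define d where "d = k mod r"
    have d: "0 < d" "d < r" using nd r by (auto simp: d_def dvd_eq_mod_eq_0)
    have kk: "g ^ k = (g ^ r) ^ (k div r) * g ^ d"
    proof -
      have "k = r * (k div r) + d" by (simp add: d_def)
      then have "g ^ k = g ^ (r * (k div r) + d)" by simp
      also have "\<dots> = (g ^ r) ^ (k div r) * g ^ d" by (simp add: power_add power_mult)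
      finally show ?thesis .
    qed
    define s where "s = (g ^ r) ^ (k div r)"
    have s: "s \<in> S" unfolding s_def using sgrp_pow[OF assms(2)] r by blast
    obtain s' where s': "s' \<in> S" "[s * s' = 1] (mod m)" using sgrp_inv[OF assms(1,2) s] by blast
    have "[s' * g ^ k = s' * s * g ^ d] (mod m)" by (simp add: kk s_def mult.assoc)
    also have "[s' * s * g ^ d = 1 * g ^ d] (mod m)"
      using s'(2) by (intro cong_mult) (simp_all add: mult.commute)
    finally have "[g ^ d = s' * g ^ k] (mod m)" by (simp add: cong_sym_eq)
    moreover have "s' * g ^ k \<in> S" using sgrp_mult[OF assms(2) s'(1) k] .
    ultimately have "g ^ d \<in> S" using sgrp_cong[OF assms(2)] by blast
    then have "r \<le> d" unfolding r_def using d(1) by (intro Least_le) blast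
    then show False using d(2) by simp
  qed
  then show ?thesis using r by blast
qed

lemma ext_step:
  assumes m: "m > 0" and S: "sgrp m S" and psi: "pchar m S psi" and g: "coprime g m"
    and r: "r > 0" "g ^ r \<in> S" "\<forall>k. g ^ k \<in> S \<longrightarrow> r dvd k"
    and w: "w ^ r = psi (g ^ r)"
  defines "S' \<equiv> {y. \<exists>h\<in>S. \<exists>i. [y = h * g ^ i] (mod m)}"
  shows "sgrp m S' \<and> S \<subseteq> S' \<and> g \<in> S' \<and>
         (\<exists>psi'. pchar m S' psi' \<and> (\<forall>x\<in>S. psi' x = psi x) \<and> psi' g = w)"
proof -
  have wd0: "psi h * w ^ i = psi h' * w ^ j"
    if h: "h \<in> S" "h' \<in> S" "j \<le> i" "[h * g ^ i = h' * g ^ j] (mod m)" for h h' i j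
  proof -
    have "g ^ i = g ^ (i - j) * g ^ j" using h(3) by (simp add: power_add[symmetric])
    then have "[(h * g ^ (i - j)) * g ^ j = h' * g ^ j] (mod m)" using h(4) by (simp add: mult.assoc)
    moreover have "coprime (g ^ j) m" using g by simp
    ultimately have c1: "[h * g ^ (i - j) = h'] (mod m)" using cong_mult_rcancel by blast
    obtain hi where hi: "hi \<in> S" "[h * hi = 1] (mod m)" using sgrp_inv[OF m S h(1)] by blast
    have "[hi * h' = hi * (h * g ^ (i - j))] (mod m)" using c1 by (simp add: cong_scalar_left cong_sym)
    also have "hi * (h * g ^ (i - j)) = (h * hi) * g ^ (i - j)" by (simp add: ac_simps)
    also have "[(h * hi) * g ^ (i - j) = 1 * g ^ (i - j)] (mod m)"
      using hi(2) by (intro cong_mult) simp_all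
    finally have "[g ^ (i - j) = hi * h'] (mod m)" by (simp add: cong_sym_eq)
    then have "g ^ (i - j) \<in> S" using sgrp_cong[OF S sgrp_mult[OF S hi(1) h(2)]] by blast
    then obtain u where u: "i - j = r * u" using r(3) by blast
    have "g ^ (i - j) = (g ^ r) ^ u" by (simp add: u power_mult)
    then have "[h' = h * (g ^ r) ^ u] (mod m)" using c1 by (simp add: cong_sym_eq)
    then have "psi h' = psi (h * (g ^ r) ^ u)"
      using pchar_cong[OF psi sgrp_mult[OF S h(1) sgrp_pow[OF S r(2)]]] by blast
    also have "\<dots> = psi h * psi (g ^ r) ^ u"
      using pchar_mult[OF psi h(1) sgrp_pow[OF S r(2)]] pchar_pow[OF S psi r(2)] by simp
    also have "\<dots> = psi h * w ^ (i - j)" by (simp add: u w[symmetric] power_mult)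
    finally have "psi h' * w ^ j = psi h * (w ^ (i - j) * w ^ j)" by simp
    also have "w ^ (i - j) * w ^ j = w ^ i" using h(3) by (simp add: power_add[symmetric])
    finally show ?thesis by simp
  qed
  have wd: "psi h * w ^ i = psi h' * w ^ j"
    if h: "h \<in> S" "h' \<in> S" "[h * g ^ i = h' * g ^ j] (mod m)" for h h' i j
  proof (cases "j \<le> i")
    case True then show ?thesis using wd0 h by blast
  next
    case False then show ?thesis using wd0[of h' h i j] h by (simp add: cong_sym_eq)
  qed
  define pick where "pick y = (SOME p. fst p \<in> S \<and> [y = fst p * g ^ snd p] (mod m))" for y
  define psi' where "psi' y = psi (fst (pick y)) * w ^ snd (pick y)" for y
  have key: "psi' y = psi h * w ^ i" if "h \<in> S" "[y = h * g ^ i] (mod m)" for y h i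
  proof -
    have "\<exists>p. fst p \<in> S \<and> [y = fst p * g ^ snd p] (mod m)" using that by (intro exI[of _ "(h, i)"]) simp
    then have p: "fst (pick y) \<in> S" "[y = fst (pick y) * g ^ snd (pick y)] (mod m)"
      unfolding pick_def by (metis (mono_tags, lifting) someI_ex)+
    have "[fst (pick y) * g ^ snd (pick y) = h * g ^ i] (mod m)"
      using p(2) that(2) by (metis cong_sym cong_trans)
    then show ?thesis unfolding psi'_def using wd[OF p(1) that(1)] by simp
  qed
  have S'I: "y \<in> S'" if "h \<in> S" "[y = h * g ^ i] (mod m)" for y h i
    using that unfolding S'_def by blast
  have S'E: "\<exists>h i. h \<in> S \<and> [y = h * g ^ i] (mod m)" if "y \<in> S'" for y
    using that unfolding S'_def by blast
  have one': "1 \<in> S'" using S'I[OF sgrp_one[OF S], of 1 0] by simp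
  have multrep: "[x * y = (h * h') * g ^ (i + j)] (mod m)"
    if "[x = h * g ^ i] (mod m)" "[y = h' * g ^ j] (mod m)" for x y h h' i j
  proof -
    have "[x * y = (h * g ^ i) * (h' * g ^ j)] (mod m)" using that by (rule cong_mult)
    also have "(h * g ^ i) * (h' * g ^ j) = (h * h') * g ^ (i + j)" by (simp add: power_add ac_simps)
    finally show ?thesis .
  qed
  have sg: "sgrp m S'"
    unfolding sgrp_def
  proof (intro conjI ballI allI impI)
    show "1 \<in> S'" by (rule one')
  next
    fix x y assume "x \<in> S'" "y \<in> S'"
    then obtain h i h' j where "h \<in> S" "[x = h * g ^ i] (mod m)" "h' \<in> S" "[y = h' * g ^ j] (mod m)"
      using S'E by blast
    then show "x * y \<in> S'" using S'I[OF sgrp_mult[OF S]] multrep by blast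
  next
    fix x y assume "x \<in> S'" "[y = x] (mod m)"
    then obtain h i where "h \<in> S" "[x = h * g ^ i] (mod m)" using S'E by blast
    then show "y \<in> S'" using S'I \<open>[y = x] (mod m)\<close> cong_trans by blast
  next
    fix x assume "x \<in> S'"
    then obtain h i where h: "h \<in> S" "[x = h * g ^ i] (mod m)" using S'E by blast
    have "coprime (h * g ^ i) m" using sgrp_coprime[OF S h(1)] g by simp
    then show "coprime x m" using h(2) cong_coprime_tr cong_sym by blast
  qed
  have pc: "pchar m S' psi'"
    unfolding pchar_def
  proof (intro conjI ballI allI impI)
    show "psi' 1 = 1" using key[OF sgrp_one[OF S], of 1 0] pchar_one[OF psi] by simp
  next
    fix x y assume "x \<in> S'" "y \<in> S'"
    then obtain h i h' j where hh: "h \<in> S" "[x = h * g ^ i] (mod m)" "h' \<in> S" "[y = h' * g ^ j] (mod m)"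
      using S'E by blast
    have "psi' (x * y) = psi (h * h') * w ^ (i + j)"
      using key[OF sgrp_mult[OF S hh(1,3)] multrep[OF hh(2,4)]] .
    also have "\<dots> = (psi h * w ^ i) * (psi h' * w ^ j)"
      using pchar_mult[OF psi hh(1,3)] by (simp add: power_add ac_simps)
    also have "\<dots> = psi' x * psi' y" using key[OF hh(1,2)] key[OF hh(3,4)] by simp
    finally show "psi' (x * y) = psi' x * psi' y" .
  next
    fix x y assume "x \<in> S'" "[y = x] (mod m)"
    then obtain h i where h: "h \<in> S" "[x = h * g ^ i] (mod m)" using S'E by blast
    have "[y = h * g ^ i] (mod m)" using h(2) \<open>[y = x] (mod m)\<close> cong_trans by blast
    then show "psi' y = psi' x" using key[OF h(1)] h(2) by simp
  qed
  have ext: "\<forall>x\<in>S. psi' x = psi x" using key[of _ _ 0] by simp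
  have sub: "S \<subseteq> S'" using S'I[of _ _ 0] by auto
  have gS': "g \<in> S'" using S'I[OF sgrp_one[OF S], of g 1] by simp
  have "psi' g = w" using key[OF sgrp_one[OF S], of g 1] pchar_one[OF psi] by simp
  then show ?thesis using sg sub gS' pc ext by blast
qed


lemma root_exists:
  fixes c :: complex
  assumes "c \<noteq> 0" "n > 0"
  shows "\<exists>w. w ^ n = c"
proof -
  define c' where "c' = root n (norm c) * cis (Arg c / n)"
  have "bij_betw (\<lambda>z. c' * z) {z. z ^ n = 1} {z. z ^ n = c}"
    unfolding c'_def by (rule bij_betw_nth_root_unity[OF assms])
  then have eq: "(\<lambda>z. c' * z) ` {z. z ^ n = 1} = {z. z ^ n = c}"
    by (simp add: bij_betw_def)
  have "c' * 1 \<in> (\<lambda>z. c' * z) ` {z. z ^ n = 1}" by (rule imageI) simp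
  then have "c' ^ n = c" unfolding eq by simp
  then show ?thesis by (rule exI)
qed

lemma coprime_add_mod: "coprime (n + m) m \<longleftrightarrow> coprime n (m::int)"
proof
  have c: "[n + m = n] (mod m)" unfolding cong_iff_lin by (rule exI[of _ "-1"]) simp
  then have c': "[n = n + m] (mod m)" by (rule cong_sym)
  show "coprime n m" if "coprime (n + m) m" using cong_coprime_tr[OF that c] .
  show "coprime (n + m) m" if "coprime n m" using cong_coprime_tr[OF that c'] .
qed

lemma extend_aux:
  assumes "m > 0"
  shows "card ({x \<in> {0..<m}. coprime x m} - S) = n \<Longrightarrow> sgrp m S \<Longrightarrow> pchar m S psi \<Longrightarrow>
      \<exists>chi. dirichlet_char m chi \<and> (\<forall>x\<in>S. chi x = psi x)"
proof (induction n arbitrary: S psi rule: less_induct)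
  case (less n S psi)
  define U where "U = {x \<in> {0..<m}. coprime x m}"
  have finU: "finite U" unfolding U_def by (rule finite_subset[of _ "{0..<m}"]) auto
  have cardn: "card (U - S) = n" using less.prems(1) unfolding U_def .
  show ?case
  proof (cases "U - S = {}")
    case True
    have allS: "x \<in> S" if "coprime x m" for x
    proof -
      have "x mod m \<in> U" unfolding U_def using assms(1) that by simp
      then have "x mod m \<in> S" using True by blast
      moreover have "[x = x mod m] (mod m)" by (simp add: cong_sym_eq)
      ultimately show ?thesis using sgrp_cong[OF less.prems(2)] by blast
    qed
    define chi where "chi x = (if coprime x m then psi x else 0)" for x
    have "dirichlet_char m chi"
      unfolding dirichlet_char_def
    proof (intro conjI allI)
      fix n
      show "chi (n + m) = chi n"
      proof (cases "coprime n m")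
        case True
        have "[n + m = n] (mod m)" unfolding cong_iff_lin by (rule exI[of _ "-1"]) simp
        then have "psi (n + m) = psi n" by (rule pchar_cong[OF less.prems(3) allS[OF True]])
        moreover have "coprime (n + m) m" using cong_coprime_tr[OF True] \<open>[n + m = n] (mod m)\<close> cong_sym by blast
        ultimately show ?thesis using True by (simp add: chi_def)
      next
        case False then show ?thesis by (simp add: chi_def coprime_add_mod)
      qed
    next
      fix a b
      show "chi (a * b) = chi a * chi b"
      proof (cases "coprime a m \<and> coprime b m")
        case True
        then have "psi (a * b) = psi a * psi b" using pchar_mult[OF less.prems(3) allS allS, of a b] by blast
        then show ?thesis using True by (simp add: chi_def)
      next
        case False
        then have "\<not> coprime (a * b) m" by simp
        then show ?thesis using False by (auto simp add: chi_def)
      qed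
    next
      show "chi 1 = 1" using pchar_one[OF less.prems(3)] by (simp add: chi_def)
    next
      fix n
      show "chi n = 0 \<longleftrightarrow> \<not> coprime n m"
      proof (cases "coprime n m")
        case True
        then have "psi n \<noteq> 0" using pchar_nz[OF assms(1) less.prems(2,3) allS[OF True]] by blast
        then show ?thesis using True by (simp add: chi_def)
      qed (simp add: chi_def)
    qed
    moreover have "\<forall>x\<in>S. chi x = psi x"
      using sgrp_coprime[OF less.prems(2)] by (simp add: chi_def)
    ultimately show ?thesis by blast
  next
    case False
    then obtain g where gU: "g \<in> U" "g \<notin> S" by blast
    have g: "coprime g m" using gU unfolding U_def by simp
    obtain r where r: "r > 0" "g ^ r \<in> S" "\<forall>k. g ^ k \<in> S \<longrightarrow> r dvd k"
      using ord_exists[OF assms(1) less.prems(2) g] by blast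
    have "psi (g ^ r) \<noteq> 0" using pchar_nz[OF assms(1) less.prems(2,3) r(2)] .
    then obtain w where w: "w ^ r = psi (g ^ r)" using root_exists r(1) by blast
    define S' where "S' = {y. \<exists>h\<in>S. \<exists>i. [y = h * g ^ i] (mod m)}"
    obtain psi' where st: "sgrp m S'" "S \<subseteq> S'" "g \<in> S'" "pchar m S' psi'" "\<forall>x\<in>S. psi' x = psi x"
      using ext_step[OF assms(1) less.prems(2,3) g r w] unfolding S'_def by blast
    have "U - S' \<subset> U - S" using st(2,3) gU by blast
    then have "card (U - S') < card (U - S)" using finU by (intro psubset_card_mono) auto
    then have "card ({x \<in> {0..<m}. coprime x m} - S') < n" using cardn unfolding U_def by simp
    then obtain chi where c: "dirichlet_char m chi" "\<forall>x\<in>S'. chi x = psi' x"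
      using less.IH[OF _ refl st(1,4)] by blast
    have "\<forall>x\<in>S. chi x = psi x" using c(2) st(2,5) by auto
    then show ?thesis using c(1) by blast
  qed
qed

lemma extend_full:
  assumes "m > 0" "sgrp m S" "pchar m S psi"
  shows "\<exists>chi. dirichlet_char m chi \<and> (\<forall>x\<in>S. chi x = psi x)"
  using extend_aux[OF assms(1) refl assms(2,3)] .

lemma separate:
  assumes m: "m > 0" and x: "coprime x m" "\<not> [x = 1] (mod m)"
  shows "\<exists>chi. dirichlet_char m chi \<and> chi x \<noteq> 1"
proof -
  define S0 where "S0 = {y. [y = 1] (mod m)}"
  have S0: "sgrp m S0" unfolding sgrp_def
  proof (intro conjI ballI allI impI)
    show "1 \<in> S0" unfolding S0_def by simp
  next
    fix a b assume "a \<in> S0" "b \<in> S0"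
    then have "[a * b = 1 * 1] (mod m)" unfolding S0_def by (intro cong_mult) simp_all
    then show "a * b \<in> S0" unfolding S0_def by simp
  next
    fix a b assume "a \<in> S0" "[b = a] (mod m)"
    then have "[b = 1] (mod m)" unfolding S0_def using cong_trans[of b a m 1] by blast
    then show "b \<in> S0" unfolding S0_def by simp
  next
    fix a assume "a \<in> S0"
    then have "[1 = a] (mod m)" unfolding S0_def by (simp add: cong_sym_eq)
    then show "coprime a m" using cong_coprime_tr[of 1 m a] by simp
  qed
  have P0: "pchar m S0 (\<lambda>_. 1)" unfolding pchar_def by simp
  obtain r where r: "r > 0" "x ^ r \<in> S0" "\<forall>k. x ^ k \<in> S0 \<longrightarrow> r dvd k"
    using ord_exists[OF m S0 x(1)] by blast
  have r1: "r \<noteq> 1" using r(2) x(2) unfolding S0_def by auto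
  have cr: "card {z::complex. z ^ r = 1} = r" using r(1) by (rule card_roots_unity_eq)
  have "{z::complex. z ^ r = 1} \<noteq> {1}"
  proof
    assume "{z::complex. z ^ r = 1} = {1}"
    then have "card {z::complex. z ^ r = 1} = 1" by simp
    then show False using cr r1 by simp
  qed
  moreover have "(1::complex) \<in> {z::complex. z ^ r = 1}" by simp
  ultimately obtain w :: complex where w: "w ^ r = 1" and w1: "w \<noteq> 1" by blast
  define S' where "S' = {y. \<exists>h\<in>S0. \<exists>i. [y = h * x ^ i] (mod m)}"
  obtain psi' where st: "sgrp m S'" "x \<in> S'" "pchar m S' psi'" "psi' x = w"
    using ext_step[OF m S0 P0 x(1) r, of w] w unfolding S'_def by auto
  obtain chi where "dirichlet_char m chi" "\<forall>y\<in>S'. chi y = psi' y"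
    using extend_full[OF m st(1,3)] by blast
  then show ?thesis using st(2,4) w1 by auto
qed


lemma coprime_int_nat: "coprime (int a) (int b) \<longleftrightarrow> coprime a b"
  by (simp only: coprime_iff_gcd_eq_1 gcd_int_int_eq of_nat_eq_1_iff)

lemma dchar_mod:
  assumes "dirichlet_char m chi"
  shows "chi (x mod m) = chi x"
proof -
  have "[x mod m = x] (mod m)" by simp
  then show ?thesis by (rule dchar_cong[OF assms])
qed

lemma dchar_pow_tot:
  assumes "dirichlet_char m chi" "m > 0" "coprime x m"
  shows "chi x ^ totient (nat m) = 1"
proof -
  have "chi x ^ totient (nat m) = chi (x ^ totient (nat m))" using dchar_power[OF assms(1)] by simp
  also have "\<dots> = chi 1" using dchar_cong[OF assms(1) euler_int[OF assms(2,3)]] by simp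
  also have "\<dots> = 1" using dchar_props(3)[OF assms(1)] .
  finally show ?thesis .
qed

lemma finite_dchars:
  assumes "m > 0"
  shows "finite {chi. dirichlet_char m chi}"
proof -
  define t where "t = totient (nat m)"
  have t: "t > 0" using assms by (simp add: t_def)
  have "card {z::complex. z ^ t = 1} = t" using t by (rule card_roots_unity_eq)
  then have "finite {z::complex. z ^ t = 1}" using t by (intro card_ge_0_finite) simp
  then have finV: "finite (insert 0 {z::complex. z ^ t = 1})" by simp
  define F where "F = PiE {0..<m} (\<lambda>_. insert 0 {z::complex. z ^ t = 1})"
  have finF: "finite F" unfolding F_def using finV by (intro finite_PiE) auto
  have "{chi. dirichlet_char m chi} \<subseteq> (\<lambda>f x. f (x mod m)) ` F"
  proof
    fix chi assume "chi \<in> {chi. dirichlet_char m chi}"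
    then have chi: "dirichlet_char m chi" by simp
    have inV: "chi x \<in> insert 0 {z. z ^ t = 1}" for x
    proof (cases "coprime x m")
      case True then show ?thesis using dchar_pow_tot[OF chi assms True] by (simp add: t_def)
    next
      case False then show ?thesis using dchar_props(4)[OF chi, of x] by simp
    qed
    have "restrict chi {0..<m} \<in> F" unfolding F_def using inV by (simp add: restrict_PiE_iff)
    moreover have "chi = (\<lambda>x. restrict chi {0..<m} (x mod m))"
    proof
      fix x
      have "x mod m \<in> {0..<m}" using assms by simp
      then show "chi x = restrict chi {0..<m} (x mod m)" using dchar_mod[OF chi, of x] by simp
    qed
    ultimately show "chi \<in> (\<lambda>f x. f (x mod m)) ` F" by (intro image_eqI[where x="restrict chi {0..<m}"])
  qed
  then show ?thesis using finF finite_surj by blast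
qed

lemma dchar_mult_closed:
  assumes "dirichlet_char m a" "dirichlet_char m b"
  shows "dirichlet_char m (\<lambda>x. a x * b x)"
  unfolding dirichlet_char_def
proof (intro conjI allI)
  fix n show "a (n + m) * b (n + m) = a n * b n" using dchar_props(1)[OF assms(1)] dchar_props(1)[OF assms(2)] by simp
next
  fix x y show "a (x * y) * b (x * y) = a x * b x * (a y * b y)"
    using dchar_props(2)[OF assms(1)] dchar_props(2)[OF assms(2)] by (simp add: ac_simps)
next
  show "a 1 * b 1 = 1" using dchar_props(3)[OF assms(1)] dchar_props(3)[OF assms(2)] by simp
next
  fix n show "(a n * b n = 0) = (\<not> coprime n m)" using dchar_props(4)[OF assms(1)] dchar_props(4)[OF assms(2)] by simp
qed

lemma principal_dchar:
  "dirichlet_char m (\<lambda>x. if coprime x m then 1 else 0)"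
  unfolding dirichlet_char_def by (simp add: coprime_add_mod)

lemma avg_zero:
  fixes F :: "'a \<Rightarrow> complex"
  assumes "finite A" "s ` A \<subseteq> A" "inj_on s A" "\<And>x. x \<in> A \<Longrightarrow> F (s x) = c * F x" "c \<noteq> 1"
  shows "sum F A = 0"
proof -
  have sA: "s ` A = A" using endo_inj_surj[OF assms(1,2,3)] .
  have "sum F A = sum F (s ` A)" using sA by simp
  also have "\<dots> = sum (F \<circ> s) A" by (rule sum.reindex[OF assms(3)])
  also have "\<dots> = sum (\<lambda>x. c * F x) A" using assms(4) by (intro sum.cong) auto
  also have "\<dots> = c * sum F A" by (simp add: sum_distrib_left)
  finally have "(1 - c) * sum F A = 0" by (simp add: algebra_simps)
  then show ?thesis using assms(5) by simp
qed

lemma dchar_ext_eq: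
  assumes "dirichlet_char m a" "dirichlet_char m b" "\<And>x. coprime x m \<Longrightarrow> a x = b x"
  shows "a = b"
proof
  fix x show "a x = b x"
  proof (cases "coprime x m")
    case False
    have "a x = 0" using dchar_props(4)[OF assms(1), of x] False by simp
    moreover have "b x = 0" using dchar_props(4)[OF assms(2), of x] False by simp
    ultimately show ?thesis by simp
  qed (rule assms(3))
qed

lemma orth_chars:
  assumes m: "m > 0"
  shows "(\<Sum>chi\<in>{chi. dirichlet_char m chi}. chi x) =
         (if [x = 1] (mod m) then of_nat (card {chi. dirichlet_char m chi}) else 0)"
proof -
  define X where "X = {chi. dirichlet_char m chi}"
  have finX: "finite X" unfolding X_def using finite_dchars[OF m] .
  show ?thesis
  proof (cases "[x = 1] (mod m)")
    case True
    have "(\<Sum>chi\<in>X. chi x) = (\<Sum>chi\<in>X. 1)"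
    proof (rule sum.cong)
      fix chi assume "chi \<in> X"
      then have chi: "dirichlet_char m chi" unfolding X_def by simp
      show "chi x = 1" using dchar_cong[OF chi True] dchar_props(3)[OF chi] by simp
    qed simp
    then show ?thesis using True unfolding X_def by simp
  next
    case False
    show ?thesis
    proof (cases "coprime x m")
      case cop: True
      obtain chi0 where chi0: "dirichlet_char m chi0" "chi0 x \<noteq> 1" using separate[OF m cop False] by blast
      have "(\<Sum>chi\<in>X. chi x) = 0"
      proof (rule avg_zero[OF finX, of "\<lambda>chi y. chi0 y * chi y" _ "chi0 x"])
        show "(\<lambda>chi y. chi0 y * chi y) ` X \<subseteq> X" unfolding X_def using dchar_mult_closed[OF chi0(1)] by auto
      next
        show "inj_on (\<lambda>chi y. chi0 y * chi y) X"
        proof (rule inj_onI)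
          fix a b assume ab: "a \<in> X" "b \<in> X" "(\<lambda>y. chi0 y * a y) = (\<lambda>y. chi0 y * b y)"
          show "a = b"
          proof (rule dchar_ext_eq[of m])
            show "dirichlet_char m a" "dirichlet_char m b" using ab(1,2) unfolding X_def by auto
            fix y assume y: "coprime y m"
            have "chi0 y * a y = chi0 y * b y" using fun_cong[OF ab(3), of y] by simp
            moreover have "chi0 y \<noteq> 0" using dchar_props(4)[OF chi0(1)] y by simp
            ultimately show "a y = b y" by simp
          qed
        qed
      qed (use chi0 in auto)
      then show ?thesis using False unfolding X_def by simp
    next
      case ncop: False
      have "(\<Sum>chi\<in>X. chi x) = (\<Sum>chi\<in>X. 0)"
      proof (rule sum.cong)
        fix chi assume "chi \<in> X"
        then have chi: "dirichlet_char m chi" unfolding X_def by simp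
        show "chi x = 0" using dchar_props(4)[OF chi] ncop by simp
      qed simp
      then show ?thesis using False unfolding X_def by simp
    qed
  qed
qed

lemma card_R0:
  assumes "m > (0::int)"
  shows "card {x \<in> {0..<m}. coprime x m} = totient (nat m)"
proof (cases "m = 1")
  case True
  have "{x \<in> {0..<m}. coprime x m} = {0}" using True by auto
  then show ?thesis using True by simp
next
  case False
  then have m1: "m > 1" using assms by simp
  have "{x \<in> {0..<m}. coprime x m} = int ` totatives (nat m)"
  proof (intro equalityI subsetI)
    fix x assume x: "x \<in> {x \<in> {0..<m}. coprime x m}"
    then have "x \<noteq> 0" using m1 by auto
    then have "x > 0" using x by simp
    moreover have "coprime (int (nat x)) (int (nat m))" using x assms by simp
    then have "coprime (nat x) (nat m)" by (simp only: coprime_int_nat)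
    moreover have "nat x \<le> nat m" using x by (intro nat_mono) simp
    ultimately have "nat x \<in> totatives (nat m)" by (simp add: in_totatives_iff)
    moreover have "x = int (nat x)" using \<open>x > 0\<close> by simp
    ultimately show "x \<in> int ` totatives (nat m)" by (rule rev_image_eqI)
  next
    fix x assume "x \<in> int ` totatives (nat m)"
    then obtain k where k: "k \<in> totatives (nat m)" "x = int k" by blast
    have "k < nat m" using totatives_less[OF k(1)] m1 by simp
    moreover have "coprime k (nat m)" using k(1) by (simp add: in_totatives_iff)
    then have "coprime (int k) (int (nat m))" by (simp only: coprime_int_nat)
    then have "coprime (int k) m" using assms by simp
    ultimately show "x \<in> {x \<in> {0..<m}. coprime x m}" using k(2) assms by simp
  qed
  then show ?thesis by (simp add: card_image totient_def)
qed

lemma card_dchars: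
  assumes m: "m > 0"
  shows "card {chi. dirichlet_char m chi} = totient (nat m)"
proof -
  define X where "X = {chi. dirichlet_char m chi}"
  define R where "R = {x \<in> {0..<m}. coprime x m}"
  define chi1 where "chi1 = (\<lambda>x::int. if coprime x m then (1::complex) else 0)"
  have finX: "finite X" unfolding X_def using finite_dchars[OF m] .
  have finR: "finite R" unfolding R_def by (rule finite_subset[of _ "{0..<m}"]) auto
  have chi1X: "chi1 \<in> X" unfolding X_def chi1_def using principal_dchar by simp
  have "(\<Sum>x\<in>R. \<Sum>chi\<in>X. chi x) = (\<Sum>x\<in>R. if x = 1 mod m then of_nat (card X) else 0)"
  proof (rule sum.cong)
    fix x assume x: "x \<in> R"
    have "[x = 1] (mod m) \<longleftrightarrow> x = 1 mod m"
    proof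
      assume "[x = 1] (mod m)"
      then have "x mod m = 1 mod m" by (simp add: cong_def)
      moreover have "x mod m = x" using x unfolding R_def by simp
      ultimately show "x = 1 mod m" by simp
    next
      assume "x = 1 mod m" then show "[x = 1] (mod m)" by (simp add: cong_def)
    qed
    then show "(\<Sum>chi\<in>X. chi x) = (if x = 1 mod m then of_nat (card X) else 0)"
      using orth_chars[OF m, of x] unfolding X_def by simp
  qed simp
  also have "\<dots> = of_nat (card X)"
  proof -
    have "1 mod m \<in> R" unfolding R_def using m by simp
    then show ?thesis using finR by (simp add: sum.delta)
  qed
  finally have A: "(\<Sum>x\<in>R. \<Sum>chi\<in>X. chi x) = of_nat (card X)" .
  have "(\<Sum>chi\<in>X. \<Sum>x\<in>R. chi x) = (\<Sum>chi\<in>X. if chi = chi1 then of_nat (card R) else 0)"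
  proof (rule sum.cong)
    fix chi assume "chi \<in> X"
    then have chi: "dirichlet_char m chi" unfolding X_def by simp
    show "(\<Sum>x\<in>R. chi x) = (if chi = chi1 then of_nat (card R) else 0)"
    proof (cases "chi = chi1")
      case True
      have "(\<Sum>x\<in>R. chi x) = (\<Sum>x\<in>R. 1)" using True unfolding R_def chi1_def by (intro sum.cong) auto
      then show ?thesis using True by simp
    next
      case False
      have "\<exists>y. coprime y m \<and> chi y \<noteq> 1"
      proof (rule ccontr)
        assume "\<not> ?thesis"
        then have "\<And>y. coprime y m \<Longrightarrow> chi y = chi1 y" unfolding chi1_def by auto
        then have "chi = chi1" using dchar_ext_eq[OF chi principal_dchar[of m]] unfolding chi1_def by blast
        then show False using False by simp
      qed
      then obtain y where y: "coprime y m" "chi y \<noteq> 1" by blast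
      have "(\<Sum>x\<in>R. chi x) = 0"
      proof (rule avg_zero[OF finR, of "\<lambda>x. (y * x) mod m" _ "chi y"])
        show "(\<lambda>x. y * x mod m) ` R \<subseteq> R"
        proof
          fix z assume "z \<in> (\<lambda>x. y * x mod m) ` R"
          then obtain x where x: "x \<in> R" "z = y * x mod m" by blast
          have "coprime (y * x) m" using y(1) x(1) unfolding R_def by simp
          then have "coprime z m" using x(2) cong_coprime_tr[of "y * x" m z] by (simp add: cong_def)
          then show "z \<in> R" using x(2) m unfolding R_def by simp
        qed
      next
        show "inj_on (\<lambda>x. y * x mod m) R"
        proof (rule inj_onI)
          fix a b assume ab: "a \<in> R" "b \<in> R" "y * a mod m = y * b mod m"
          then have "[y * a = y * b] (mod m)" by (simp add: cong_def)
          then have "[a = b] (mod m)" using cong_mult_lcancel[OF y(1)] by simp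
          then show "a = b" using ab(1,2) unfolding R_def by (intro cong_less_imp_eq_int) auto
        qed
      next
        fix x assume "x \<in> R"
        show "chi (y * x mod m) = chi y * chi x" using dchar_mod[OF chi] dchar_props(2)[OF chi] by simp
      qed (use y in simp)
      then show ?thesis using False by simp
    qed
  qed simp
  also have "\<dots> = of_nat (card R)" using chi1X finX by (simp add: sum.delta)
  finally have B: "(\<Sum>chi\<in>X. \<Sum>x\<in>R. chi x) = of_nat (card R)" .
  have "(\<Sum>x\<in>R. \<Sum>chi\<in>X. chi x) = (\<Sum>chi\<in>X. \<Sum>x\<in>R. chi x)" by (rule sum.swap)
  then have "card X = card R" using A B by simp
  then show ?thesis using card_R0[OF m] unfolding X_def R_def by simp
qed


lemma e_add: "e (a + b) = e a * e b"
  unfolding e_def by (simp add: distrib_left exp_add)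

lemma e_int: "e (real_of_int k) = 1"
proof -
  have "e (real_of_int k) = exp (\<i> * (of_int k * (of_real pi * 2)))" unfolding e_def by (simp add: ac_simps)
  also have "\<dots> = 1" by (rule exp_2pi_1_int)
  finally show ?thesis .
qed

lemma norm_e: "norm (e x) = 1"
  unfolding e_def by simp

lemma e_cnj_mult: "cnj (e x) * e x = 1"
proof -
  have "e x * cnj (e x) = of_real ((norm (e x))\<^sup>2)" by (rule complex_norm_square[symmetric])
  then show ?thesis using norm_e[of x] by (simp add: mult.commute)
qed

definition psi0 :: "nat \<Rightarrow> int \<Rightarrow> complex" where
  "psi0 q x = e (real_of_int (x - 1) / real q ^ 2)"

definition H0 :: "nat \<Rightarrow> int set" where
  "H0 q = {x \<in> {0..<int q ^ 2}. [x = 1] (mod int q)}"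

lemma psi0_one: "psi0 q 1 = 1"
  unfolding psi0_def by (simp add: e_def)

lemma psi0_cong:
  assumes "q > 0" "[y = x] (mod int q ^ 2)"
  shows "psi0 q y = psi0 q x"
proof -
  obtain k where k: "y = x + int q ^ 2 * k" using assms(2) cong_iff_lin cong_sym by blast
  have E: "real_of_int (y - 1) / real q ^ 2 = real_of_int (x - 1) / real q ^ 2 + real_of_int k"
    using assms(1) by (simp add: k field_simps)
  have "psi0 q y = e (real_of_int (x - 1) / real q ^ 2 + real_of_int k)" unfolding psi0_def E ..
  also have "\<dots> = psi0 q x" unfolding psi0_def by (simp only: e_add e_int mult_1_right)
  finally show ?thesis .
qed

lemma psi0_mult:
  assumes "q > 0" "[x = 1] (mod int q)" "[y = 1] (mod int q)"
  shows "psi0 q (x * y) = psi0 q x * psi0 q y"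
proof -
  obtain a where a: "x - 1 = int q * a" using assms(2) by (auto simp: cong_iff_dvd_diff elim!: dvdE)
  obtain b where b: "y - 1 = int q * b" using assms(3) by (auto simp: cong_iff_dvd_diff elim!: dvdE)
  have "x * y - 1 = (x - 1) + (y - 1) + (x - 1) * (y - 1)" by (simp add: algebra_simps)
  also have "\<dots> = (x - 1) + (y - 1) + int q ^ 2 * (a * b)" by (simp add: a b power2_eq_square ac_simps)
  finally have xy: "x * y - 1 = (x - 1) + (y - 1) + int q ^ 2 * (a * b)" .
  have "real_of_int (x * y - 1) / real q ^ 2
        = real_of_int (x - 1) / real q ^ 2 + real_of_int (y - 1) / real q ^ 2 + real_of_int (a * b)"
    using assms(1) unfolding xy by (simp add: field_simps)
  then have "psi0 q (x * y) = e (real_of_int (x - 1) / real q ^ 2 + real_of_int (y - 1) / real q ^ 2 + real_of_int (a * b))"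
    unfolding psi0_def by (rule arg_cong)
  also have "\<dots> = psi0 q x * psi0 q y" unfolding psi0_def by (simp only: e_add e_int mult_1_right)
  finally show ?thesis .
qed

lemma H0_sub: "x \<in> H0 q \<Longrightarrow> [x = 1] (mod int q)"
  unfolding H0_def by simp

lemma cong1_coprime:
  assumes "[x = 1] (mod int q)"
  shows "coprime x (int q ^ 2)"
proof -
  have "coprime 1 (int q)" by simp
  then have "coprime x (int q)" using cong_coprime_tr[of 1 "int q" x] assms by (simp add: cong_sym_eq)
  then show ?thesis by simp
qed

lemma card_H0:
  assumes "q > 0"
  shows "card (H0 q) = q"
proof -
  define r where "r = 1 mod int q"
  have "H0 q = (\<lambda>k. int q * k + r) ` {0..<int q}"
  proof (intro equalityI subsetI)
    fix x assume x: "x \<in> H0 q"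
    then have x1: "0 \<le> x" "x < int q ^ 2" "x mod int q = r" unfolding H0_def r_def by (auto simp: cong_def)
    have "x = int q * (x div int q) + r" using x1(3) by (metis mult_div_mod_eq)
    moreover have "0 \<le> x div int q" using x1(1) assms by (simp add: pos_imp_zdiv_nonneg_iff)
    moreover have "x div int q < int q"
    proof (rule ccontr)
      assume "\<not> x div int q < int q"
      then have "int q * int q \<le> int q * (x div int q)" by (intro mult_left_mono) auto
      moreover have "x = int q * (x div int q) + x mod int q" by simp
      moreover have "0 \<le> x mod int q" using assms by simp
      ultimately have "int q * int q \<le> x" by linarith
      then show False using x1(2) by (simp add: power2_eq_square)
    qed
    ultimately show "x \<in> (\<lambda>k. int q * k + r) ` {0..<int q}" by (intro image_eqI) auto
  next
    fix x assume "x \<in> (\<lambda>k. int q * k + r) ` {0..<int q}"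
    then obtain k where k: "0 \<le> k" "k < int q" "x = int q * k + r" by auto
    have r: "0 \<le> r" "r < int q" using assms unfolding r_def by auto
    have "int q * k \<le> int q * (int q - 1)" using k assms by (intro mult_left_mono) auto
    then have "x < int q ^ 2" using k(3) r by (simp add: power2_eq_square algebra_simps)
    moreover have "0 \<le> x" using k r assms by simp
    moreover have "[x = 1] (mod int q)" unfolding cong_def k(3) r_def by simp
    ultimately show "x \<in> H0 q" unfolding H0_def by simp
  qed
  moreover have "inj_on (\<lambda>k. int q * k + r) {0..<int q}" using assms by (intro inj_onI) simp
  ultimately have "card (H0 q) = card {0..<int q}" by (simp add: card_image)
  then show ?thesis by simp
qed


lemma G1_iff:
  assumes q: "q > 0" and chi: "dirichlet_char (int q ^ 2) chi"
  shows "chi \<in> G1 q \<longleftrightarrow> (\<forall>h\<in>H0 q. chi h = psi0 q h)"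
proof
  assume "chi \<in> G1 q"
  then show "\<forall>h\<in>H0 q. chi h = psi0 q h" unfolding G1_def H0_def psi0_def by auto
next
  assume A: "\<forall>h\<in>H0 q. chi h = psi0 q h"
  have "chi x = e (real_of_int (x - 1) / real q ^ 2)" if x: "[x = 1] (mod int q)" for x
  proof -
    define m where "m = int q ^ 2"
    have m: "m > 0" using q by (simp add: m_def)
    have "[x mod m = x] (mod m)" by simp
    then have "[x mod m = x] (mod int q)" by (rule cong_dvd_modulus) (simp add: m_def)
    then have "[x mod m = 1] (mod int q)" using x by (rule cong_trans)
    then have "x mod m \<in> H0 q" unfolding H0_def using m by (simp add: m_def)
    then have "chi (x mod m) = psi0 q (x mod m)" using A by blast
    moreover have "chi (x mod m) = chi x" using dchar_mod[OF chi] unfolding m_def .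
    moreover have "psi0 q (x mod m) = psi0 q x" using psi0_cong[OF q] \<open>[x mod m = x] (mod m)\<close> unfolding m_def by blast
    ultimately show ?thesis unfolding psi0_def by simp
  qed
  then show "chi \<in> G1 q" unfolding G1_def using chi by blast
qed

lemma indicator_G1:
  assumes q: "q > 0" and chi: "dirichlet_char (int q ^ 2) chi"
  shows "(\<Sum>h\<in>H0 q. chi h * cnj (psi0 q h)) = (if chi \<in> G1 q then of_nat q else 0)"
proof (cases "chi \<in> G1 q")
  case True
  then have A: "\<forall>h\<in>H0 q. chi h = psi0 q h" using G1_iff[OF q chi] by blast
  have "(\<Sum>h\<in>H0 q. chi h * cnj (psi0 q h)) = (\<Sum>h\<in>H0 q. 1)"
  proof (rule sum.cong)
    fix h assume "h \<in> H0 q"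
    then have "chi h = psi0 q h" using A by blast
    then show "chi h * cnj (psi0 q h) = 1" unfolding psi0_def using e_cnj_mult by (simp add: mult.commute)
  qed simp
  then show ?thesis using True card_H0[OF q] by simp
next
  case False
  define m where "m = int q ^ 2"
  have m: "m > 0" using q by (simp add: m_def)
  obtain h0 where h0: "h0 \<in> H0 q" "chi h0 \<noteq> psi0 q h0" using False G1_iff[OF q chi] by blast
  have h01: "[h0 = 1] (mod int q)" using H0_sub[OF h0(1)] .
  have h0c: "coprime h0 m" using cong1_coprime[OF h01] unfolding m_def .
  have finH: "finite (H0 q)" unfolding H0_def by (rule finite_subset[of _ "{0..<int q ^ 2}"]) auto
  have "(\<Sum>h\<in>H0 q. chi h * cnj (psi0 q h)) = 0"
  proof (rule avg_zero[OF finH, of "\<lambda>h. (h0 * h) mod m" _ "chi h0 * cnj (psi0 q h0)"])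
    show "(\<lambda>h. h0 * h mod m) ` H0 q \<subseteq> H0 q"
    proof
      fix z assume "z \<in> (\<lambda>h. h0 * h mod m) ` H0 q"
      then obtain h where h: "h \<in> H0 q" "z = h0 * h mod m" by blast
      have "[h0 * h mod m = h0 * h] (mod m)" by simp
      then have "[h0 * h mod m = h0 * h] (mod int q)" by (rule cong_dvd_modulus) (simp add: m_def)
      moreover have "[h0 * h = 1 * 1] (mod int q)" using h01 H0_sub[OF h(1)] by (rule cong_mult)
      ultimately have "[z = 1] (mod int q)" using h(2) cong_trans by fastforce
      moreover have "0 \<le> z" "z < m" using h(2) m by auto
      ultimately show "z \<in> H0 q" unfolding H0_def m_def by simp
    qed
  next
    show "inj_on (\<lambda>h. h0 * h mod m) (H0 q)"
    proof (rule inj_onI)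
      fix a b assume ab: "a \<in> H0 q" "b \<in> H0 q" "h0 * a mod m = h0 * b mod m"
      then have "[h0 * a = h0 * b] (mod m)" by (simp add: cong_def)
      then have "[a = b] (mod m)" using cong_mult_lcancel[OF h0c] by simp
      then show "a = b" using ab(1,2) unfolding H0_def m_def by (intro cong_less_imp_eq_int) auto
    qed
  next
    fix h assume h: "h \<in> H0 q"
    have "chi (h0 * h mod m) = chi h0 * chi h"
      using dchar_mod[OF chi] dchar_props(2)[OF chi] unfolding m_def by simp
    moreover have "psi0 q (h0 * h mod m) = psi0 q h0 * psi0 q h"
    proof -
      have "[h0 * h mod m = h0 * h] (mod int q ^ 2)" unfolding m_def by simp
      then have "psi0 q (h0 * h mod m) = psi0 q (h0 * h)" by (rule psi0_cong[OF q])
      also have "\<dots> = psi0 q h0 * psi0 q h" by (rule psi0_mult[OF q h01 H0_sub[OF h]])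
      finally show ?thesis .
    qed
    ultimately show "chi (h0 * h mod m) * cnj (psi0 q (h0 * h mod m)) = chi h0 * cnj (psi0 q h0) * (chi h * cnj (psi0 q h))"
      by (simp add: ac_simps)
  next
    show "chi h0 * cnj (psi0 q h0) \<noteq> 1"
    proof
      assume c: "chi h0 * cnj (psi0 q h0) = 1"
      have "chi h0 = chi h0 * (cnj (psi0 q h0) * psi0 q h0)" unfolding psi0_def using e_cnj_mult by simp
      also have "\<dots> = psi0 q h0" using c by (simp add: ac_simps)
      finally show False using h0(2) by simp
    qed
  qed
  then show ?thesis using False by simp
qed

lemma sum_G1_formula:
  assumes q: "q > 0"
  defines "X \<equiv> {chi. dirichlet_char (int q ^ 2) chi}"
  shows "of_nat q * (\<Sum>\<xi>\<in>G1 q. \<xi> y) =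
         (\<Sum>h\<in>H0 q. cnj (psi0 q h) * (if [h * y = 1] (mod (int q ^ 2)) then of_nat (card X) else 0))"
proof -
  have m: "int q ^ 2 > 0" using q by simp
  have finX: "finite X" unfolding X_def using finite_dchars[OF m] .
  have finH: "finite (H0 q)" unfolding H0_def by (rule finite_subset[of _ "{0..<int q ^ 2}"]) auto
  have GX: "G1 q \<subseteq> X" unfolding G1_def X_def by auto
  have "(\<Sum>\<xi>\<in>G1 q. \<xi> y) = (\<Sum>chi\<in>X. if chi \<in> G1 q then chi y else 0)"
    using finX GX by (simp add: sum.inter_restrict[symmetric] Int_absorb1)
  then have "of_nat q * (\<Sum>\<xi>\<in>G1 q. \<xi> y) = (\<Sum>chi\<in>X. (if chi \<in> G1 q then of_nat q else 0) * chi y)"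
    by (auto simp: sum_distrib_left intro!: sum.cong)
  also have "\<dots> = (\<Sum>chi\<in>X. (\<Sum>h\<in>H0 q. chi h * cnj (psi0 q h)) * chi y)"
    using indicator_G1[OF q] unfolding X_def by (intro sum.cong) auto
  also have "\<dots> = (\<Sum>chi\<in>X. \<Sum>h\<in>H0 q. cnj (psi0 q h) * chi (h * y))"
  proof (rule sum.cong)
    fix chi assume "chi \<in> X"
    then have chi: "dirichlet_char (int q ^ 2) chi" unfolding X_def by simp
    show "(\<Sum>h\<in>H0 q. chi h * cnj (psi0 q h)) * chi y = (\<Sum>h\<in>H0 q. cnj (psi0 q h) * chi (h * y))"
      unfolding sum_distrib_right using dchar_props(2)[OF chi] by (intro sum.cong) (simp_all add: ac_simps)
  qed simp
  also have "\<dots> = (\<Sum>h\<in>H0 q. \<Sum>chi\<in>X. cnj (psi0 q h) * chi (h * y))" by (rule sum.swap)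
  also have "\<dots> = (\<Sum>h\<in>H0 q. cnj (psi0 q h) * (\<Sum>chi\<in>X. chi (h * y)))" by (simp add: sum_distrib_left)
  also have "\<dots> = (\<Sum>h\<in>H0 q. cnj (psi0 q h) * (if [h * y = 1] (mod (int q ^ 2)) then of_nat (card X) else 0))"
    using orth_chars[OF m] unfolding X_def by simp
  finally show ?thesis .
qed

lemma card_G1:
  assumes q: "q > 0"
  shows "finite (G1 q)" "card (G1 q) = totient q"
proof -
  define X where "X = {chi. dirichlet_char (int q ^ 2) chi}"
  have m: "int q ^ 2 > 0" using q by simp
  have finX: "finite X" unfolding X_def using finite_dchars[OF m] .
  have GX: "G1 q \<subseteq> X" unfolding G1_def X_def by auto
  show finG: "finite (G1 q)" using finite_subset[OF GX finX] .
  have finH: "finite (H0 q)" unfolding H0_def by (rule finite_subset[of _ "{0..<int q ^ 2}"]) auto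
  have "(\<Sum>\<xi>\<in>G1 q. \<xi> 1) = (\<Sum>\<xi>\<in>G1 q. 1)"
  proof (rule sum.cong)
    fix \<xi> assume "\<xi> \<in> G1 q"
    then have "dirichlet_char (int q ^ 2) \<xi>" unfolding G1_def by simp
    then show "\<xi> 1 = 1" by (rule dchar_props(3))
  qed simp
  then have "(\<Sum>\<xi>\<in>G1 q. \<xi> 1) = of_nat (card (G1 q))" by simp
  then have "of_nat q * of_nat (card (G1 q)) =
      (\<Sum>h\<in>H0 q. cnj (psi0 q h) * (if [h * 1 = 1] (mod (int q ^ 2)) then of_nat (card X) else 0))"
    using sum_G1_formula[OF q, of 1] unfolding X_def by simp
  also have "\<dots> = (\<Sum>h\<in>H0 q. if h = 1 mod (int q ^ 2) then of_nat (card X) else 0)"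
  proof (rule sum.cong)
    fix h assume h: "h \<in> H0 q"
    have "[h = 1] (mod int q ^ 2) \<longleftrightarrow> h = 1 mod int q ^ 2"
    proof
      assume "[h = 1] (mod int q ^ 2)"
      then have "h mod int q ^ 2 = 1 mod int q ^ 2" by (simp add: cong_def)
      moreover have "h mod int q ^ 2 = h" using h unfolding H0_def by simp
      ultimately show "h = 1 mod int q ^ 2" by simp
    next
      assume "h = 1 mod int q ^ 2" then show "[h = 1] (mod int q ^ 2)" by (simp add: cong_def)
    qed
    moreover have "h = 1 mod int q ^ 2 \<Longrightarrow> cnj (psi0 q h) = 1"
    proof -
      assume "h = 1 mod int q ^ 2"
      then have "[h = 1] (mod int q ^ 2)" by (simp add: cong_def)
      then have "psi0 q h = psi0 q 1" by (rule psi0_cong[OF q])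
      then show "cnj (psi0 q h) = 1" using psi0_one by simp
    qed
    ultimately show "cnj (psi0 q h) * (if [h * 1 = 1] (mod int q ^ 2) then of_nat (card X) else 0) =
        (if h = 1 mod int q ^ 2 then of_nat (card X) else 0)" by auto
  qed simp
  also have "\<dots> = of_nat (card X)"
  proof -
    have "1 mod int q ^ 2 \<in> H0 q" unfolding H0_def using m
      by (simp add: cong_def) (metis cong_def cong_dvd_modulus cong_mod_left cong_refl dvd_triv_left power2_eq_square)
    then show ?thesis using finH by (simp add: sum.delta)
  qed
  finally have "of_nat q * of_nat (card (G1 q)) = (of_nat (card X) :: complex)" .
  then have "q * card (G1 q) = card X" by (metis of_nat_eq_iff of_nat_mult)
  also have "card X = totient (q ^ 2)" unfolding X_def using card_dchars[OF m] by (simp add: nat_power_eq)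
  also have "\<dots> = q * totient q" by (simp add: totient_power)
  finally show "card (G1 q) = totient q" using q by simp
qed


lemma G1_dchar: "\<xi> \<in> G1 q \<Longrightarrow> dirichlet_char (int q ^ 2) \<xi>"
  unfolding G1_def by simp

lemma G1_norm:
  assumes "q > 0" "\<xi> \<in> G1 q" "coprime n (int q)"
  shows "norm (\<xi> n) = 1"
  using dchar_norm[OF G1_dchar[OF assms(2)]] assms by simp

lemma G1_zero:
  assumes "\<xi> \<in> G1 q" "\<not> coprime n (int q)"
  shows "\<xi> n = 0"
  using dchar_props(4)[OF G1_dchar[OF assms(1)], of n] assms(2) by simp

lemma G1_norm_le:
  assumes "q > 0" "\<xi> \<in> G1 q"
  shows "norm (\<xi> n) \<le> 1"
  using dchar_norm_le[OF G1_dchar[OF assms(2)]] assms(1) by simp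

lemma orth_G1:
  assumes q: "q > 0" and n: "coprime n (int q)" and k: "coprime k (int q)"
    and nk: "\<not> [n = k] (mod int q)"
  shows "(\<Sum>\<xi>\<in>G1 q. \<xi> n * cnj (\<xi> k)) = 0"
proof -
  define m where "m = int q ^ 2"
  have m: "m > 0" using q by (simp add: m_def)
  have km: "coprime k m" using k by (simp add: m_def)
  obtain k' where k': "[k * k' = 1] (mod m)" using cong_solve_coprime_int[OF km] by blast
  have "(\<Sum>\<xi>\<in>G1 q. \<xi> n * cnj (\<xi> k)) = (\<Sum>\<xi>\<in>G1 q. \<xi> (n * k'))"
  proof (rule sum.cong)
    fix \<xi> assume xi: "\<xi> \<in> G1 q"
    have chi: "dirichlet_char m \<xi>" using G1_dchar[OF xi] unfolding m_def .
    have "\<xi> k * \<xi> k' = 1"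
      using dchar_props(2)[OF chi, of k k'] dchar_cong[OF chi k'] dchar_props(3)[OF chi] by simp
    moreover have "cnj (\<xi> k) * \<xi> k = 1"
    proof -
      have "\<xi> k * cnj (\<xi> k) = of_real ((norm (\<xi> k))\<^sup>2)" by (rule complex_norm_square[symmetric])
      then show ?thesis using G1_norm[OF q xi k] by (simp add: mult.commute)
    qed
    ultimately have "cnj (\<xi> k) = \<xi> k'"
      by (metis mult.assoc mult_1_left mult_1_right)
    then show "\<xi> n * cnj (\<xi> k) = \<xi> (n * k')" using dchar_props(2)[OF chi, of n k'] by simp
  qed simp
  also have "\<dots> = 0"
  proof -
    have "of_nat q * (\<Sum>\<xi>\<in>G1 q. \<xi> (n * k')) =
         (\<Sum>h\<in>H0 q. cnj (psi0 q h) * (if [h * (n * k') = 1] (mod (int q ^ 2))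
             then of_nat (card {chi. dirichlet_char (int q ^ 2) chi}) else 0))"
      by (rule sum_G1_formula[OF q])
    also have "\<dots> = (\<Sum>h\<in>H0 q. 0)"
    proof (rule sum.cong)
      fix h assume h: "h \<in> H0 q"
      have "\<not> [h * (n * k') = 1] (mod (int q ^ 2))"
      proof
        assume c: "[h * (n * k') = 1] (mod (int q ^ 2))"
        then have c1: "[h * (n * k') = 1] (mod int q)" by (rule cong_dvd_modulus) simp
        have "[h * (n * k') = 1 * (n * k')] (mod int q)" using H0_sub[OF h] by (intro cong_mult) simp_all
        then have "[n * k' = 1] (mod int q)" using c1 by (simp add: cong_sym_eq) (meson cong_sym cong_trans)
        then have "[n * k' * k = 1 * k] (mod int q)" by (intro cong_mult) simp_all
        moreover have "[k * k' = 1] (mod int q)" using k' unfolding m_def by (rule cong_dvd_modulus) simp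
        then have "[n * (k * k') = n * 1] (mod int q)" by (intro cong_mult) simp_all
        ultimately have "[n = k] (mod int q)" by (simp add: ac_simps) (meson cong_sym cong_trans)
        then show False using nk by simp
      qed
      then show "cnj (psi0 q h) * (if [h * (n * k') = 1] (mod (int q ^ 2))
             then of_nat (card {chi. dirichlet_char (int q ^ 2) chi}) else 0) = 0" by simp
    qed simp
    finally show ?thesis using q by simp
  qed
  finally show ?thesis .
qed

lemma card_cong_set:
  assumes q: "q > 0" and n: "n \<in> {M+1..M+int N}"
  shows "card {k \<in> {M+1..M+int N}. k \<noteq> n \<and> [n = k] (mod int q)} \<le> 2 * (N div q)"
proof -
  define K where "K = int N div int q"
  have KN: "nat K = N div q" unfolding K_def by (simp add: zdiv_int[symmetric])
  have sub: "{k \<in> {M+1..M+int N}. k \<noteq> n \<and> [n = k] (mod int q)} \<subseteq> (\<lambda>j. n + int q * j) ` ({-K..-1} \<union> {1..K})"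
  proof
    fix k assume kk: "k \<in> {k \<in> {M+1..M+int N}. k \<noteq> n \<and> [n = k] (mod int q)}"
    then obtain j where j: "k = n + int q * j" using cong_iff_lin by blast
    have "j \<noteq> 0" using kk j by auto
    have "\<bar>int q * j\<bar> \<le> int N" using kk n j by auto
    then have "\<bar>j\<bar> * int q \<le> int N" by (simp add: abs_mult ac_simps)
    then have "(\<bar>j\<bar> * int q) div int q \<le> int N div int q" using q by (intro zdiv_mono1) auto
    then have "\<bar>j\<bar> \<le> K" using q unfolding K_def by simp
    then have "j \<in> {-K..-1} \<union> {1..K}" using \<open>j \<noteq> 0\<close> by auto
    then show "k \<in> (\<lambda>j. n + int q * j) ` ({-K..-1} \<union> {1..K})" using j by blast
  qed
  have "card {k \<in> {M+1..M+int N}. k \<noteq> n \<and> [n = k] (mod int q)} \<le> card ((\<lambda>j. n + int q * j) ` ({-K..-1} \<union> {1..K}))"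
    by (rule card_mono[OF _ sub]) simp
  also have "\<dots> \<le> card ({-K..-1} \<union> {1..K})" by (rule card_image_le) simp
  also have "\<dots> \<le> card {-K..-1} + card {1..K}" by (rule card_Un_le)
  also have "\<dots> = 2 * nat K" by simp
  finally show ?thesis using KN by simp
qed


lemma main_bound:
  fixes a :: "int \<Rightarrow> complex"
  assumes q: "q > 0"
  shows "\<bar>(real q / real (totient q)) * (\<Sum>\<xi>\<in>G1 q. (cmod (\<Sum>n\<in>{M+1..M+int N}. a n * \<xi> n))^2)
            - real q * (\<Sum>n\<in>{n\<in>{M+1..M+int N}. coprime n (int q)}. (cmod (a n))^2)\<bar>
           \<le> 2 * real N * (\<Sum>n\<in>{n\<in>{M+1..M+int N}. coprime n (int q)}. (cmod (a n))^2)"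
proof -
  define I where "I = {M+1..M+int N}"
  define D where "D = (\<Sum>n\<in>{n\<in>I. coprime n (int q)}. (cmod (a n))^2)"
  define L where "L = (\<Sum>\<xi>\<in>G1 q. (cmod (\<Sum>n\<in>I. a n * \<xi> n))^2)"
  define T where "T n k = (\<Sum>\<xi>\<in>G1 q. \<xi> n * cnj (\<xi> k))" for n k
  define phi where "phi = totient q"
  define K where "K = N div q"
  define Q where "Q n k = (k \<noteq> n \<and> coprime n (int q) \<and> coprime k (int q) \<and> [n = k] (mod int q))" for n k
  define g where "g n k = a n * cnj (a k) * T n k" for n k
  have phi: "phi > 0" using q by (simp add: phi_def)
  have finI: "finite I" unfolding I_def by simp
  have finG: "finite (G1 q)" and cardG: "card (G1 q) = phi" using card_G1[OF q] by (simp_all add: phi_def)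
  have D0: "D \<ge> 0" unfolding D_def by (intro sum_nonneg) simp
  have Dalt: "D = (\<Sum>n\<in>I. if coprime n (int q) then (cmod (a n))^2 else 0)"
    unfolding D_def using finI by (simp add: sum.inter_filter)
  have S1: "complex_of_real L = (\<Sum>n\<in>I. \<Sum>k\<in>I. g n k)"
  proof -
    have "complex_of_real L = (\<Sum>\<xi>\<in>G1 q. \<Sum>n\<in>I. \<Sum>k\<in>I. a n * cnj (a k) * (\<xi> n * cnj (\<xi> k)))"
      unfolding L_def of_real_sum
    proof (rule sum.cong[OF refl])
      fix \<xi>
      have "complex_of_real ((cmod (\<Sum>n\<in>I. a n * \<xi> n))\<^sup>2) = (\<Sum>n\<in>I. a n * \<xi> n) * cnj (\<Sum>n\<in>I. a n * \<xi> n)"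
        by (rule complex_norm_square)
      also have "\<dots> = (\<Sum>n\<in>I. a n * \<xi> n) * (\<Sum>k\<in>I. cnj (a k) * cnj (\<xi> k))" by (simp add: cnj_sum)
      also have "\<dots> = (\<Sum>n\<in>I. \<Sum>k\<in>I. (a n * \<xi> n) * (cnj (a k) * cnj (\<xi> k)))" by (rule sum_product)
      also have "\<dots> = (\<Sum>n\<in>I. \<Sum>k\<in>I. a n * cnj (a k) * (\<xi> n * cnj (\<xi> k)))" by (simp add: ac_simps)
      finally show "complex_of_real ((cmod (\<Sum>n\<in>I. a n * \<xi> n))\<^sup>2) = (\<Sum>n\<in>I. \<Sum>k\<in>I. a n * cnj (a k) * (\<xi> n * cnj (\<xi> k)))" .
    qed
    also have "\<dots> = (\<Sum>n\<in>I. \<Sum>\<xi>\<in>G1 q. \<Sum>k\<in>I. a n * cnj (a k) * (\<xi> n * cnj (\<xi> k)))" by (rule sum.swap)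
    also have "\<dots> = (\<Sum>n\<in>I. \<Sum>k\<in>I. \<Sum>\<xi>\<in>G1 q. a n * cnj (a k) * (\<xi> n * cnj (\<xi> k)))"
      by (rule sum.cong[OF refl]) (rule sum.swap)
    also have "\<dots> = (\<Sum>n\<in>I. \<Sum>k\<in>I. g n k)" unfolding g_def T_def by (simp add: sum_distrib_left)
    finally show ?thesis .
  qed
  have Tnn: "T n n = (if coprime n (int q) then of_nat phi else 0)" for n
  proof (cases "coprime n (int q)")
    case True
    have "T n n = (\<Sum>\<xi>\<in>G1 q. 1)"
      unfolding T_def
    proof (rule sum.cong[OF refl])
      fix \<xi> assume xi: "\<xi> \<in> G1 q"
      have "\<xi> n * cnj (\<xi> n) = of_real ((norm (\<xi> n))\<^sup>2)" by (rule complex_norm_square[symmetric])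
      then show "\<xi> n * cnj (\<xi> n) = 1" using G1_norm[OF q xi True] by simp
    qed
    then show ?thesis using True cardG by simp
  next
    case False
    have "T n n = 0" unfolding T_def
    proof (rule sum.neutral, rule ballI)
      fix \<xi> assume xi: "\<xi> \<in> G1 q"
      show "\<xi> n * cnj (\<xi> n) = 0" using G1_zero[OF xi False] by simp
    qed
    then show ?thesis using False by simp
  qed
  have diag: "(\<Sum>n\<in>I. g n n) = complex_of_real (real phi * D)"
  proof -
    have "(\<Sum>n\<in>I. g n n) = (\<Sum>n\<in>I. complex_of_real (real phi * (if coprime n (int q) then (cmod (a n))^2 else 0)))"
    proof (rule sum.cong[OF refl])
      fix n
      have "a n * cnj (a n) = of_real ((cmod (a n))\<^sup>2)" by (rule complex_norm_square[symmetric])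
      then show "g n n = complex_of_real (real phi * (if coprime n (int q) then (cmod (a n))^2 else 0))"
        unfolding g_def Tnn by simp
    qed
    also have "\<dots> = complex_of_real (real phi * D)" unfolding Dalt of_real_sum sum_distrib_left by simp
    finally show ?thesis .
  qed
  define E where "E = (\<Sum>n\<in>I. \<Sum>k\<in>I - {n}. g n k)"
  have split: "complex_of_real L = complex_of_real (real phi * D) + E"
  proof -
    have "(\<Sum>n\<in>I. \<Sum>k\<in>I. g n k) = (\<Sum>n\<in>I. g n n + (\<Sum>k\<in>I - {n}. g n k))"
      using finI by (intro sum.cong[OF refl]) (simp add: sum.remove)
    then show ?thesis unfolding S1 E_def diag[symmetric] by (simp add: sum.distrib)
  qed
  then have normE: "norm E = \<bar>L - real phi * D\<bar>"
  proof -
    have "E = complex_of_real (L - real phi * D)" using split by simp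
    then show ?thesis by (simp only: norm_of_real)
  qed
  have gbound: "norm (g n k) \<le> real phi * (if Q n k then cmod (a n) * cmod (a k) else 0)"
    if "k \<noteq> n" for n k
  proof (cases "Q n k")
    case True
    have "norm (T n k) \<le> (\<Sum>\<xi>\<in>G1 q. norm (\<xi> n * cnj (\<xi> k)))" unfolding T_def by (rule norm_sum)
    also have "\<dots> \<le> (\<Sum>\<xi>\<in>G1 q. 1)"
    proof (rule sum_mono)
      fix \<xi> assume xi: "\<xi> \<in> G1 q"
      have "norm (\<xi> n) * norm (\<xi> k) \<le> 1 * 1"
        using G1_norm_le[OF q xi, of n] G1_norm_le[OF q xi, of k] by (intro mult_mono) auto
      then show "norm (\<xi> n * cnj (\<xi> k)) \<le> 1" by (simp add: norm_mult)
    qed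
    also have "\<dots> = real phi" using cardG by simp
    finally have "norm (T n k) \<le> real phi" .
    then have "cmod (a n) * cmod (a k) * norm (T n k) \<le> cmod (a n) * cmod (a k) * real phi"
      by (intro mult_left_mono) auto
    then show ?thesis using True unfolding g_def by (simp add: norm_mult ac_simps)
  next
    case False
    have "T n k = 0"
    proof (cases "coprime n (int q) \<and> coprime k (int q)")
      case True
      then have "\<not> [n = k] (mod int q)" using False that unfolding Q_def by blast
      then show ?thesis unfolding T_def using orth_G1[OF q] True by blast
    next
      case cf: False
      show ?thesis unfolding T_def
      proof (rule sum.neutral, rule ballI)
        fix \<xi> assume xi: "\<xi> \<in> G1 q"
        show "\<xi> n * cnj (\<xi> k) = 0" using cf G1_zero[OF xi, of n] G1_zero[OF xi, of k] by auto
      qed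
    qed
    then show ?thesis using False unfolding g_def by simp
  qed
  define W where "W = (\<Sum>n\<in>I. \<Sum>k\<in>I. if Q n k then (cmod (a n))^2 else 0)"
  have Qsym: "Q n k = Q k n" for n k unfolding Q_def by (auto simp: cong_sym_eq)
  have "norm E \<le> (\<Sum>n\<in>I. \<Sum>k\<in>I - {n}. norm (g n k))"
    unfolding E_def by (rule order.trans[OF norm_sum sum_mono]) (rule norm_sum)
  also have "\<dots> \<le> (\<Sum>n\<in>I. \<Sum>k\<in>I - {n}. real phi * (if Q n k then cmod (a n) * cmod (a k) else 0))"
    by (intro sum_mono gbound) auto
  also have "\<dots> = real phi * (\<Sum>n\<in>I. \<Sum>k\<in>I. if Q n k then cmod (a n) * cmod (a k) else 0)"
  proof -
    have "(\<Sum>k\<in>I - {n}. (if Q n k then cmod (a n) * cmod (a k) else 0)) =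
          (\<Sum>k\<in>I. (if Q n k then cmod (a n) * cmod (a k) else 0))" if "n \<in> I" for n
      using finI that by (simp add: sum.remove Q_def)
    then have "(\<Sum>n\<in>I. real phi * (\<Sum>k\<in>I - {n}. (if Q n k then cmod (a n) * cmod (a k) else 0))) =
          (\<Sum>n\<in>I. real phi * (\<Sum>k\<in>I. (if Q n k then cmod (a n) * cmod (a k) else 0)))"
      by (intro sum.cong) auto
    then show ?thesis by (simp only: sum_distrib_left)
  qed
  also have "\<dots> \<le> real phi * W"
  proof (rule mult_left_mono)
    have "(\<Sum>n\<in>I. \<Sum>k\<in>I. if Q n k then cmod (a n) * cmod (a k) else 0)
        \<le> (\<Sum>n\<in>I. \<Sum>k\<in>I. (if Q n k then (cmod (a n))^2 else 0) / 2 + (if Q n k then (cmod (a k))^2 else 0) / 2)"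
    proof (intro sum_mono)
      fix n k
      have "0 \<le> (cmod (a n) - cmod (a k))^2" by simp
      then have "cmod (a n) * cmod (a k) \<le> (cmod (a n))^2 / 2 + (cmod (a k))^2 / 2"
        by (simp add: power2_eq_square algebra_simps)
      then show "(if Q n k then cmod (a n) * cmod (a k) else 0)
          \<le> (if Q n k then (cmod (a n))^2 else 0) / 2 + (if Q n k then (cmod (a k))^2 else 0) / 2" by simp
    qed
    also have "\<dots> = W / 2 + (\<Sum>n\<in>I. \<Sum>k\<in>I. if Q n k then (cmod (a k))^2 else 0) / 2"
      unfolding W_def by (simp add: sum.distrib sum_divide_distrib)
    also have "(\<Sum>n\<in>I. \<Sum>k\<in>I. if Q n k then (cmod (a k))^2 else 0) = W"
    proof -
      have "(\<Sum>n\<in>I. \<Sum>k\<in>I. if Q n k then (cmod (a k))^2 else 0) = (\<Sum>k\<in>I. \<Sum>n\<in>I. if Q n k then (cmod (a k))^2 else 0)"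
        by (rule sum.swap)
      also have "\<dots> = W" unfolding W_def using Qsym by simp
      finally show ?thesis .
    qed
    finally show "(\<Sum>n\<in>I. \<Sum>k\<in>I. if Q n k then cmod (a n) * cmod (a k) else 0) \<le> W" by simp
  qed simp
  also have "\<dots> \<le> real phi * (2 * real K * D)"
  proof (rule mult_left_mono)
    have "W \<le> (\<Sum>n\<in>I. (if coprime n (int q) then (cmod (a n))^2 else 0) * (2 * real K))"
      unfolding W_def
    proof (rule sum_mono)
      fix n assume n: "n \<in> I"
      show "(\<Sum>k\<in>I. if Q n k then (cmod (a n))^2 else 0) \<le> (if coprime n (int q) then (cmod (a n))^2 else 0) * (2 * real K)"
      proof (cases "coprime n (int q)")
        case True
        have "(\<Sum>k\<in>I. if Q n k then (cmod (a n))^2 else 0) = (\<Sum>k\<in>{k\<in>I. Q n k}. (cmod (a n))^2)"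
          by (rule sum.inter_filter[OF finI, symmetric])
        also have "\<dots> = real (card {k\<in>I. Q n k}) * (cmod (a n))^2" by simp
        also have "\<dots> \<le> real (2 * K) * (cmod (a n))^2"
        proof (rule mult_right_mono)
          have "{k\<in>I. Q n k} \<subseteq> {k \<in> {M+1..M+int N}. k \<noteq> n \<and> [n = k] (mod int q)}"
            unfolding I_def Q_def by auto
          then have "card {k\<in>I. Q n k} \<le> card {k \<in> {M+1..M+int N}. k \<noteq> n \<and> [n = k] (mod int q)}"
            by (rule card_mono[rotated]) (rule finite_subset[of _ "{M+1..M+int N}"], auto)
          also have "\<dots> \<le> 2 * K" unfolding K_def using card_cong_set[OF q] n unfolding I_def by blast
          finally show "real (card {k\<in>I. Q n k}) \<le> real (2 * K)" by simp
        qed simp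
        finally show ?thesis using True by (simp add: ac_simps)
      next
        case False
        then show ?thesis unfolding Q_def by simp
      qed
    qed
    also have "\<dots> = 2 * real K * D" unfolding Dalt by (simp add: sum_distrib_left sum_distrib_right ac_simps)
    finally show "W \<le> 2 * real K * D" .
  qed simp
  finally have Ebound: "\<bar>L - real phi * D\<bar> \<le> real phi * (2 * real K * D)" using normE by simp
  have "\<bar>(real q / real phi) * L - real q * D\<bar> = (real q / real phi) * \<bar>L - real phi * D\<bar>"
  proof -
    have "(real q / real phi) * L - real q * D = (real q / real phi) * (L - real phi * D)"
      using phi by (simp add: field_simps)
    then show ?thesis using phi by (simp add: abs_mult)
  qed
  also have "\<dots> \<le> (real q / real phi) * (real phi * (2 * real K * D))"
    using Ebound by (intro mult_left_mono) auto
  also have "\<dots> = 2 * (real q * real K) * D" using phi by (simp add: field_simps)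
  also have "\<dots> \<le> 2 * real N * D"
  proof -
    have "q * K \<le> N" unfolding K_def by (simp add: mult.commute)
    then have "real q * real K \<le> real N" by (metis of_nat_le_iff of_nat_mult)
    then show ?thesis using D0 by (intro mult_right_mono) auto
  qed
  finally show ?thesis unfolding L_def D_def I_def phi_def .
qed


theorem mainTheorem2:
  shows "(\<exists>C::real. \<forall>(M::int) (N::nat) (q::nat) (a::int \<Rightarrow> complex). q > 0 \<longrightarrow>
           \<bar>(real q / real (totient q)) *
              (\<Sum>\<xi>\<in>G1 q. (cmod (\<Sum>n\<in>{M+1..M+int N}. a n * \<xi> n))^2)
            - real q * (\<Sum>n\<in>{n\<in>{M+1..M+int N}. coprime n (int q)}. (cmod (a n))^2)\<bar>
           \<le> C * real N * (\<Sum>n\<in>{n\<in>{M+1..M+int N}. coprime n (int q)}. (cmod (a n))^2))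
       \<and> (\<exists>C::real. \<forall>(M::int) (N::nat) (Q::nat) (a::int \<Rightarrow> complex).
           (\<Sum>q=1..Q. (real q / real (totient q)) *
              (\<Sum>\<xi>\<in>G1 q. (cmod (\<Sum>n\<in>{M+1..M+int N}. a n * \<xi> n))^2))
           \<le> C * (real Q ^ 2 + real Q * real N) * (\<Sum>n\<in>{M+1..M+int N}. (cmod (a n))^2))"
proof (rule conjI)
  show "\<exists>C::real. \<forall>(M::int) (N::nat) (q::nat) (a::int \<Rightarrow> complex). q > 0 \<longrightarrow>
           \<bar>(real q / real (totient q)) *
              (\<Sum>\<xi>\<in>G1 q. (cmod (\<Sum>n\<in>{M+1..M+int N}. a n * \<xi> n))^2)
            - real q * (\<Sum>n\<in>{n\<in>{M+1..M+int N}. coprime n (int q)}. (cmod (a n))^2)\<bar>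
           \<le> C * real N * (\<Sum>n\<in>{n\<in>{M+1..M+int N}. coprime n (int q)}. (cmod (a n))^2)"
    by (intro exI[of _ 2] allI impI) (rule main_bound)
next
  show "\<exists>C::real. \<forall>(M::int) (N::nat) (Q::nat) (a::int \<Rightarrow> complex).
           (\<Sum>q=1..Q. (real q / real (totient q)) *
              (\<Sum>\<xi>\<in>G1 q. (cmod (\<Sum>n\<in>{M+1..M+int N}. a n * \<xi> n))^2))
           \<le> C * (real Q ^ 2 + real Q * real N) * (\<Sum>n\<in>{M+1..M+int N}. (cmod (a n))^2)"
  proof (intro exI[of _ 2] allI)
    fix M :: int and N Q :: nat and a :: "int \<Rightarrow> complex"
    define I where "I = {M+1..M+int N}"
    define Dall where "Dall = (\<Sum>n\<in>I. (cmod (a n))^2)"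
    have D0: "Dall \<ge> 0" unfolding Dall_def by (intro sum_nonneg) simp
    have termb: "(real q / real (totient q)) * (\<Sum>\<xi>\<in>G1 q. (cmod (\<Sum>n\<in>I. a n * \<xi> n))^2)
        \<le> (real Q + 2 * real N) * Dall" if q: "q \<in> {1..Q}" for q
    proof -
      have q0: "q > 0" using q by simp
      define Dq where "Dq = (\<Sum>n\<in>{n\<in>I. coprime n (int q)}. (cmod (a n))^2)"
      have "Dq \<le> Dall" unfolding Dq_def Dall_def I_def by (rule sum_mono2) auto
      have Dq0: "Dq \<ge> 0" unfolding Dq_def by (intro sum_nonneg) simp
      have "\<bar>(real q / real (totient q)) * (\<Sum>\<xi>\<in>G1 q. (cmod (\<Sum>n\<in>I. a n * \<xi> n))^2) - real q * Dq\<bar>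
          \<le> 2 * real N * Dq" unfolding Dq_def I_def by (rule main_bound[OF q0])
      then have "(real q / real (totient q)) * (\<Sum>\<xi>\<in>G1 q. (cmod (\<Sum>n\<in>I. a n * \<xi> n))^2)
          \<le> (real q + 2 * real N) * Dq" by (simp add: abs_le_iff algebra_simps)
      also have "\<dots> \<le> (real Q + 2 * real N) * Dall"
        using q \<open>Dq \<le> Dall\<close> Dq0 by (intro mult_mono) auto
      finally show ?thesis .
    qed
    have "(\<Sum>q=1..Q. (real q / real (totient q)) * (\<Sum>\<xi>\<in>G1 q. (cmod (\<Sum>n\<in>I. a n * \<xi> n))^2))
        \<le> (\<Sum>q=1..Q. (real Q + 2 * real N) * Dall)" by (rule sum_mono) (rule termb)
    also have "\<dots> = real Q * (real Q + 2 * real N) * Dall" by simp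
    also have "\<dots> \<le> 2 * (real Q ^ 2 + real Q * real N) * Dall"
      using D0 by (intro mult_right_mono) (auto simp: power2_eq_square algebra_simps)
    finally show "(\<Sum>q=1..Q. (real q / real (totient q)) *
              (\<Sum>\<xi>\<in>G1 q. (cmod (\<Sum>n\<in>{M+1..M+int N}. a n * \<xi> n))^2))
           \<le> 2 * (real Q ^ 2 + real Q * real N) * (\<Sum>n\<in>{M+1..M+int N}. (cmod (a n))^2)"
      unfolding I_def Dall_def .
  qed
qed

end
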